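(* Consider $K$-class classification with the uniform off-diagonal noise model described in the context. Then for every classifier $h$ and every $g:\{1,\dots,K\}^2\to\mathrm{dom}(f^* )$, $$\widetilde d_f(h,g)=\Big(1-\sum_{j=1}^K e_j\Big)\,d_f(h,g)+\sum_{j=1}^K e_j\,\Delta^j_f(h,g).$$
   Context: $(X,Y)$ is a random pair with $X\in\mathcal X$ and $Y\in\{1,\dots,K\}$. A noisy label $\tilde Y\in\{1,\dots,K\}$ is generated from $Y$, conditionally independently of $X$ given $Y$, via the transition matrix $T_{i,j}={\mathbb P}(\tilde Y=j\mid Y=i)$. Uniform off-diagonal model: there are $e_1,\dots,e_K\ge0$ with $\sum_j e_j<1$ such that $T_{i,j}=e_j$ for all $i\ne j$ and $T_{i,i}=1-\sum_{j\ne i}e_j$. A classifier is a measurable $h:\mathcal X\to\{1,\dots,K\}$. $P$ is the joint law of $(h(X),Y)$, $Q$ the product of its marginals ${\mathbb P}(h(X)=y){\mathbb P}(Y=y')$, and $\tilde P,\tilde Q$ the same with $\tilde Y$. $f$ is convex with $f(1)=0$, $f^*(u)=\sup_v\{uv-f(v)\}$. $d_f(h,g)=\mathbb E_{Z\sim P}[g(Z)]-\mathbb E_{Z\sim Q}[f^*(g(Z))]$, $\widetilde d_f(h,g)=\mathbb E_{Z\sim \tilde P}[g(Z)]-\mathbb E_{Z\sim \tilde Q}[f^*(g(Z))]$, and for a class $j$, $\Delta^j_f(h,g)=\mathbb E_X[g(h(X),j)]-\mathbb E_X[f^*(g(h(X),j))]$. *)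

theory Defs
  imports "HOL-Probability.Probability"
begin

definition fconj :: "real set \<Rightarrow> (real \<Rightarrow> real) \<Rightarrow> real \<Rightarrow> real" where
  "fconj D f u = (SUP v\<in>D. u * v - f v)"

definition fconj_dom :: "real set \<Rightarrow> (real \<Rightarrow> real) \<Rightarrow> real set" where
  "fconj_dom D f = {u. bdd_above ((\<lambda>v. u * v - f v) ` D)}"

(* d_f(h,g) w.r.t. a label variable L (L = Y gives d_f, L = Y~ gives d~_f):
   E_{Z ~ P}[g Z] - E_{Z ~ Q}[f*(g Z)], P the joint law of (h(X),L),
   Q the product of its marginals. *)
definition dfL :: "'w measure \<Rightarrow> ('w \<Rightarrow> 'x) \<Rightarrow> ('w \<Rightarrow> nat) \<Rightarrow> ('x \<Rightarrow> nat)
    \<Rightarrow> (nat \<Rightarrow> nat \<Rightarrow> real) \<Rightarrow> real set \<Rightarrow> (real \<Rightarrow> real) \<Rightarrow> real" where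
  "dfL M X L h g D f =
     integral\<^sup>L (distr M (count_space UNIV \<Otimes>\<^sub>M count_space UNIV) (\<lambda>\<omega>. (h (X \<omega>), L \<omega>)))
        (\<lambda>(a, b). g a b)
   - integral\<^sup>L (distr M (count_space UNIV) (\<lambda>\<omega>. h (X \<omega>)) \<Otimes>\<^sub>M distr M (count_space UNIV) L)
        (\<lambda>(a, b). fconj D f (g a b))"

definition DeltaF :: "'w measure \<Rightarrow> ('w \<Rightarrow> 'x) \<Rightarrow> ('x \<Rightarrow> nat)
    \<Rightarrow> (nat \<Rightarrow> nat \<Rightarrow> real) \<Rightarrow> real set \<Rightarrow> (real \<Rightarrow> real) \<Rightarrow> nat \<Rightarrow> real" where
  "DeltaF M X h g D f j =
     integral\<^sup>L M (\<lambda>\<omega>. g (h (X \<omega>)) j) - integral\<^sup>L M (\<lambda>\<omega>. fconj D f (g (h (X \<omega>)) j))"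

definition Tunif :: "nat \<Rightarrow> (nat \<Rightarrow> real) \<Rightarrow> nat \<Rightarrow> nat \<Rightarrow> real" where
  "Tunif K e i j = (if i = j then 1 - (\<Sum>j'\<in>{1..K} - {i}. e j') else e j)"

end

theory Submission
  imports Defs
begin
lemma int_fin_supp:
  fixes N :: "('a::countable) measure" and F :: "'a \<Rightarrow> real"
  assumes fm: "finite_measure N" and sN: "sets N = sets (count_space UNIV)"
    and S: "finite S" and ae: "AE z in N. z \<in> S"
  shows "integral\<^sup>L N F = (\<Sum>s\<in>S. F s * measure N {s})"
proof -
  interpret finite_measure N by fact
  have meas: "\<And>G. G \<in> borel_measurable N"
    using sN by (simp add: measurable_cong_sets[OF sN refl])
  have "integral\<^sup>L N F = integral\<^sup>L N (\<lambda>z. \<Sum>s\<in>S. F s * indicator {s} z)"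
  proof (rule integral_cong_AE)
    show "AE z in N. F z = (\<Sum>s\<in>S. F s * indicator {s} z)"
      using ae by eventually_elim (simp add: indicator_def S)
  qed (rule meas)+
  also have "\<dots> = (\<Sum>s\<in>S. integral\<^sup>L N (\<lambda>z. F s * indicator {s} z))"
    by (rule Bochner_Integration.integral_sum) (auto simp: sN intro!: integrable_real_indicator simp flip: top.not_eq_extremum)
  also have "\<dots> = (\<Sum>s\<in>S. F s * measure N {s})"
    using sN sets_eq_imp_space_eq[OF sN] by simp
  finally show ?thesis .
qed


lemma joint_int:
  fixes M :: "'w measure" and Z L :: "'w \<Rightarrow> nat" and G :: "nat \<Rightarrow> nat \<Rightarrow> real"
  assumes M: "prob_space M"
    and Zm: "Z \<in> measurable M (count_space UNIV)" and Lm: "L \<in> measurable M (count_space UNIV)"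
    and Zr: "\<forall>\<omega>\<in>space M. Z \<omega> \<in> {1..K}" and Lr: "\<forall>\<omega>\<in>space M. L \<omega> \<in> {1..K}"
  shows "integral\<^sup>L (distr M (count_space UNIV \<Otimes>\<^sub>M count_space UNIV) (\<lambda>\<omega>. (Z \<omega>, L \<omega>))) (\<lambda>(a, b). G a b)
     = (\<Sum>a\<in>{1..K}. \<Sum>b\<in>{1..K}. G a b * measure M {\<omega>\<in>space M. Z \<omega> = a \<and> L \<omega> = b})"
proof -
  interpret prob_space M by fact
  have cs: "count_space UNIV \<Otimes>\<^sub>M count_space UNIV = (count_space UNIV :: (nat \<times> nat) measure)"
    by (simp add: pair_measure_countable)
  have T: "(\<lambda>\<omega>. (Z \<omega>, L \<omega>)) \<in> measurable M (count_space UNIV)"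
    using Zm Lm by (simp add: measurable_pair_iff flip: cs)
  let ?N = "distr M (count_space UNIV) (\<lambda>\<omega>. (Z \<omega>, L \<omega>))"
  have fm: "finite_measure ?N"
    using T by (intro prob_space.finite_measure prob_space_distr) auto
  have ae: "AE z in ?N. z \<in> {1..K} \<times> {1..K}"
    using T Zr Lr by (subst AE_distr_iff) auto
  have "integral\<^sup>L ?N (\<lambda>(a, b). G a b) = (\<Sum>z\<in>{1..K} \<times> {1..K}. (case z of (a, b) \<Rightarrow> G a b) * measure ?N {z})"
    by (rule int_fin_supp[OF fm _ _ ae]) auto
  also have "\<dots> = (\<Sum>a\<in>{1..K}. \<Sum>b\<in>{1..K}. G a b * measure ?N {(a, b)})"
    unfolding sum.cartesian_product by (intro sum.cong) auto
  also have "\<dots> = (\<Sum>a\<in>{1..K}. \<Sum>b\<in>{1..K}. G a b * measure M {\<omega>\<in>space M. Z \<omega> = a \<and> L \<omega> = b})"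
    using T by (intro sum.cong refl) (simp add: measure_distr vimage_def Int_def conj_commute)
  finally show ?thesis by (simp add: cs)
qed

lemma prod_int:
  fixes M :: "'w measure" and Z L :: "'w \<Rightarrow> nat" and G :: "nat \<Rightarrow> nat \<Rightarrow> real"
  assumes M: "prob_space M"
    and Zm: "Z \<in> measurable M (count_space UNIV)" and Lm: "L \<in> measurable M (count_space UNIV)"
    and Zr: "\<forall>\<omega>\<in>space M. Z \<omega> \<in> {1..K}" and Lr: "\<forall>\<omega>\<in>space M. L \<omega> \<in> {1..K}"
  shows "integral\<^sup>L (distr M (count_space UNIV) Z \<Otimes>\<^sub>M distr M (count_space UNIV) L) (\<lambda>(a, b). G a b)
     = (\<Sum>a\<in>{1..K}. \<Sum>b\<in>{1..K}. G a b * (measure M {\<omega>\<in>space M. Z \<omega> = a} * measure M {\<omega>\<in>space M. L \<omega> = b}))"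
proof -
  interpret prob_space M by fact
  let ?N1 = "distr M (count_space UNIV) Z"
  let ?N2 = "distr M (count_space UNIV) L"
  interpret N1: prob_space ?N1 using Zm by (rule prob_space_distr)
  interpret N2: prob_space ?N2 using Lm by (rule prob_space_distr)
  interpret P: pair_sigma_finite ?N1 ?N2 by unfold_locales
  have cs: "count_space UNIV \<Otimes>\<^sub>M count_space UNIV = (count_space UNIV :: (nat \<times> nat) measure)"
    by (simp add: pair_measure_countable)
  have sP: "sets (?N1 \<Otimes>\<^sub>M ?N2) = sets (count_space UNIV)"
    by (subst cs[symmetric]) (rule sets_pair_measure_cong; simp)
  have fm: "finite_measure (?N1 \<Otimes>\<^sub>M ?N2)"
    using N2.emeasure_pair_measure_Times[where N="?N1" and A=UNIV and B=UNIV]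
    by (intro finite_measureI) (simp add: space_pair_measure ennreal_mult_eq_top_iff)
  have ae1: "AE a in ?N1. a \<in> {1..K}" using Zm Zr by (subst AE_distr_iff) auto
  have ae2: "AE b in ?N2. b \<in> {1..K}" using Lm Lr by (subst AE_distr_iff) auto
  have ae: "AE z in ?N1 \<Otimes>\<^sub>M ?N2. z \<in> {1..K} \<times> {1..K}"
  proof (rule P.AE_pair_measure)
    show "{x \<in> space (?N1 \<Otimes>\<^sub>M ?N2). x \<in> {1..K} \<times> {1..K}} \<in> sets (?N1 \<Otimes>\<^sub>M ?N2)"
      by (simp add: sP)
    show "AE x in ?N1. AE y in ?N2. (x, y) \<in> {1..K} \<times> {1..K}"
      using ae1
    proof eventually_elim
      case (elim x)
      show ?case using ae2 by eventually_elim (use elim in auto)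
    qed
  qed
  have "integral\<^sup>L (?N1 \<Otimes>\<^sub>M ?N2) (\<lambda>(a, b). G a b) = (\<Sum>z\<in>{1..K} \<times> {1..K}. (case z of (a, b) \<Rightarrow> G a b) * measure (?N1 \<Otimes>\<^sub>M ?N2) {z})"
    by (rule int_fin_supp[OF fm sP _ ae]) auto
  also have "\<dots> = (\<Sum>a\<in>{1..K}. \<Sum>b\<in>{1..K}. G a b * measure (?N1 \<Otimes>\<^sub>M ?N2) ({a} \<times> {b}))"
    unfolding sum.cartesian_product by (intro sum.cong) auto
  also have "\<dots> = (\<Sum>a\<in>{1..K}. \<Sum>b\<in>{1..K}. G a b * (measure ?N1 {a} * measure ?N2 {b}))"
  proof (intro sum.cong refl)
    fix a b
    have "emeasure (?N1 \<Otimes>\<^sub>M ?N2) ({a} \<times> {b}) = emeasure ?N1 {a} * emeasure ?N2 {b}"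
      by (rule N2.emeasure_pair_measure_Times) auto
    then have "measure (?N1 \<Otimes>\<^sub>M ?N2) ({a} \<times> {b}) = measure ?N1 {a} * measure ?N2 {b}"
      unfolding measure_def by (simp only: enn2real_mult)
    then show "G a b * measure (?N1 \<Otimes>\<^sub>M ?N2) ({a} \<times> {b}) = G a b * (measure ?N1 {a} * measure ?N2 {b})"
      by simp
  qed
  also have "\<dots> = (\<Sum>a\<in>{1..K}. \<Sum>b\<in>{1..K}. G a b * (measure M {\<omega>\<in>space M. Z \<omega> = a} * measure M {\<omega>\<in>space M. L \<omega> = b}))"
    using Zm Lm by (intro sum.cong refl) (simp add: measure_distr vimage_def Int_def conj_commute)
  finally show ?thesis .
qed


lemma single_int:
  fixes M :: "'w measure" and Z :: "'w \<Rightarrow> nat" and G :: "nat \<Rightarrow> real"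
  assumes M: "prob_space M"
    and Zm: "Z \<in> measurable M (count_space UNIV)"
    and Zr: "\<forall>\<omega>\<in>space M. Z \<omega> \<in> {1..K}"
  shows "integral\<^sup>L M (\<lambda>\<omega>. G (Z \<omega>)) = (\<Sum>a\<in>{1..K}. G a * measure M {\<omega>\<in>space M. Z \<omega> = a})"
proof -
  interpret prob_space M by fact
  let ?N = "distr M (count_space UNIV) Z"
  have "integral\<^sup>L M (\<lambda>\<omega>. G (Z \<omega>)) = integral\<^sup>L ?N G"
    using Zm by (simp add: integral_distr)
  also have "\<dots> = (\<Sum>a\<in>{1..K}. G a * measure ?N {a})"
  proof (rule int_fin_supp)
    show "finite_measure ?N" using Zm by (intro prob_space.finite_measure prob_space_distr) auto
    show "AE z in ?N. z \<in> {1..K}" using Zm Zr by (subst AE_distr_iff) auto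
  qed auto
  also have "\<dots> = (\<Sum>a\<in>{1..K}. G a * measure M {\<omega>\<in>space M. Z \<omega> = a})"
    using Zm by (intro sum.cong refl) (simp add: measure_distr vimage_def Int_def conj_commute)
  finally show ?thesis .
qed

lemma split_meas:
  fixes M :: "'w measure" and W :: "'w \<Rightarrow> nat"
  assumes M: "prob_space M"
    and Wm: "W \<in> measurable M (count_space UNIV)"
    and Wr: "\<forall>\<omega>\<in>space M. W \<omega> \<in> {1..K}"
    and P: "{\<omega>\<in>space M. P \<omega>} \<in> sets M"
  shows "measure M {\<omega>\<in>space M. P \<omega>} = (\<Sum>i\<in>{1..K}. measure M {\<omega>\<in>space M. P \<omega> \<and> W \<omega> = i})"
proof -
  interpret prob_space M by fact
  have "{\<omega>\<in>space M. P \<omega>} = (\<Union>i\<in>{1..K}. {\<omega>\<in>space M. P \<omega> \<and> W \<omega> = i})"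
    using Wr by auto
  moreover have "measure M (\<Union>i\<in>{1..K}. {\<omega>\<in>space M. P \<omega> \<and> W \<omega> = i})
      = (\<Sum>i\<in>{1..K}. measure M {\<omega>\<in>space M. P \<omega> \<and> W \<omega> = i})"
  proof (rule finite_measure_finite_Union)
    have "\<And>i. {\<omega>\<in>space M. P \<omega> \<and> W \<omega> = i} = {\<omega>\<in>space M. P \<omega>} \<inter> (W -` {i} \<inter> space M)" by auto
    then show "(\<lambda>i. {\<omega>\<in>space M. P \<omega> \<and> W \<omega> = i}) ` {1..K} \<subseteq> sets M"
      using P Wm by (auto intro!: sets.Int measurable_sets[OF Wm])
    show "disjoint_family_on (\<lambda>i. {\<omega>\<in>space M. P \<omega> \<and> W \<omega> = i}) {1..K}"
      by (auto simp: disjoint_family_on_def)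
  qed auto
  ultimately show ?thesis by simp
qed

theorem theorem4:
  fixes M :: "'w measure" and SX :: "'x measure"
    and X :: "'w \<Rightarrow> 'x" and Y Yt :: "'w \<Rightarrow> nat"
    and K :: nat and e :: "nat \<Rightarrow> real"
    and h :: "'x \<Rightarrow> nat" and g :: "nat \<Rightarrow> nat \<Rightarrow> real"
    and D :: "real set" and f :: "real \<Rightarrow> real"
  assumes M: "prob_space M"
    and X_meas: "X \<in> measurable M SX"
    and Y_meas: "Y \<in> measurable M (count_space UNIV)"
    and Yt_meas: "Yt \<in> measurable M (count_space UNIV)"
    and Y_range: "\<forall>\<omega>\<in>space M. Y \<omega> \<in> {1..K}"
    and Yt_range: "\<forall>\<omega>\<in>space M. Yt \<omega> \<in> {1..K}"
    and e_nonneg: "\<forall>j\<in>{1..K}. e j \<ge> 0"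
    and e_sum: "(\<Sum>j\<in>{1..K}. e j) < 1"
    and noise: "\<forall>A\<in>sets SX. \<forall>i\<in>{1..K}. \<forall>j\<in>{1..K}.
        measure M {\<omega>\<in>space M. X \<omega> \<in> A \<and> Y \<omega> = i \<and> Yt \<omega> = j}
          = measure M {\<omega>\<in>space M. X \<omega> \<in> A \<and> Y \<omega> = i} * Tunif K e i j"
    and h_meas: "h \<in> measurable SX (count_space UNIV)"
    and h_range: "\<forall>x\<in>space SX. h x \<in> {1..K}"
    and D_convex: "convex D" and one_D: "1 \<in> D"
    and f_convex: "convex_on D f" and f_one: "f 1 = 0"
    and g_dom: "\<forall>y\<in>{1..K}. \<forall>y'\<in>{1..K}. g y y' \<in> fconj_dom D f"
  shows "dfL M X Yt h g D f
           = (1 - (\<Sum>j\<in>{1..K}. e j)) * dfL M X Y h g D f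
             + (\<Sum>j\<in>{1..K}. e j * DeltaF M X h g D f j)"
proof -
  interpret prob_space M by fact
  define Z where "Z = (\<lambda>\<omega>. h (X \<omega>))"
  have Zm: "Z \<in> measurable M (count_space UNIV)"
    unfolding Z_def using measurable_comp[OF X_meas h_meas] by (simp add: comp_def)
  have Zr: "\<forall>\<omega>\<in>space M. Z \<omega> \<in> {1..K}"
    unfolding Z_def using h_range measurable_space[OF X_meas] by auto
  note [measurable] = Zm Y_meas Yt_meas
  define S where "S = (\<Sum>j\<in>{1..K}. e j)"
  define F where "F = (\<lambda>a b. fconj D f (g a b))"
  define p where "p = (\<lambda>a b. measure M {\<omega>\<in>space M. Z \<omega> = a \<and> Y \<omega> = b})"
  define pt where "pt = (\<lambda>a b. measure M {\<omega>\<in>space M. Z \<omega> = a \<and> Yt \<omega> = b})"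
  define q where "q = (\<lambda>a. measure M {\<omega>\<in>space M. Z \<omega> = a})"
  define mu where "mu = (\<lambda>b. measure M {\<omega>\<in>space M. Y \<omega> = b})"
  define mut where "mut = (\<lambda>b. measure M {\<omega>\<in>space M. Yt \<omega> = b})"
  have dY: "dfL M X Y h g D f = (\<Sum>a\<in>{1..K}. \<Sum>b\<in>{1..K}. g a b * p a b)
      - (\<Sum>a\<in>{1..K}. \<Sum>b\<in>{1..K}. F a b * (q a * mu b))"
    unfolding dfL_def F_def p_def q_def mu_def
    using joint_int[OF M Zm Y_meas Zr Y_range] prod_int[OF M Zm Y_meas Zr Y_range]
    by (simp add: Z_def)
  have dYt: "dfL M X Yt h g D f = (\<Sum>a\<in>{1..K}. \<Sum>b\<in>{1..K}. g a b * pt a b)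
      - (\<Sum>a\<in>{1..K}. \<Sum>b\<in>{1..K}. F a b * (q a * mut b))"
    unfolding dfL_def F_def pt_def q_def mut_def
    using joint_int[OF M Zm Yt_meas Zr Yt_range] prod_int[OF M Zm Yt_meas Zr Yt_range]
    by (simp add: Z_def)
  have dD: "DeltaF M X h g D f j = (\<Sum>a\<in>{1..K}. g a j * q a) - (\<Sum>a\<in>{1..K}. F a j * q a)" for j
    unfolding DeltaF_def F_def q_def
    using single_int[OF M Zm Zr, of "\<lambda>a. g a j"] single_int[OF M Zm Zr, of "\<lambda>a. fconj D f (g a j)"]
    by (simp add: Z_def)
  have q_split: "q a = (\<Sum>i\<in>{1..K}. p a i)" for a
    unfolding q_def p_def by (rule split_meas[OF M Y_meas Y_range]) measurable
  have pt1: "pt a b = (1 - S) * p a b + e b * q a" if a: "a \<in> {1..K}" and b: "b \<in> {1..K}" for a b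
  proof -
    let ?A = "h -` {a} \<inter> space SX"
    have A: "?A \<in> sets SX" using h_meas by (rule measurable_sets) simp
    have eqA: "{\<omega>\<in>space M. X \<omega> \<in> ?A \<and> R \<omega>} = {\<omega>\<in>space M. Z \<omega> = a \<and> R \<omega>}" for R
      using measurable_space[OF X_meas] by (auto simp: Z_def)
    have "pt a b = (\<Sum>i\<in>{1..K}. measure M {\<omega>\<in>space M. (Z \<omega> = a \<and> Yt \<omega> = b) \<and> Y \<omega> = i})"
      unfolding pt_def by (rule split_meas[OF M Y_meas Y_range]) measurable
    also have "\<dots> = (\<Sum>i\<in>{1..K}. p a i * Tunif K e i b)"
    proof (intro sum.cong refl)
      fix i assume i: "i \<in> {1..K}"
      have "measure M {\<omega>\<in>space M. (Z \<omega> = a \<and> Yt \<omega> = b) \<and> Y \<omega> = i}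
          = measure M {\<omega>\<in>space M. X \<omega> \<in> ?A \<and> Y \<omega> = i \<and> Yt \<omega> = b}"
        by (subst eqA) (auto intro!: arg_cong[where f="measure M"])
      also have "\<dots> = measure M {\<omega>\<in>space M. X \<omega> \<in> ?A \<and> Y \<omega> = i} * Tunif K e i b"
        using noise A i b by blast
      also have "\<dots> = p a i * Tunif K e i b"
        unfolding p_def by (subst eqA) rule
      finally show "measure M {\<omega>\<in>space M. (Z \<omega> = a \<and> Yt \<omega> = b) \<and> Y \<omega> = i} = p a i * Tunif K e i b" .
    qed
    also have "\<dots> = p a b * Tunif K e b b + (\<Sum>i\<in>{1..K} - {b}. p a i * Tunif K e i b)"
      using b by (subst sum.remove[of _ b]) auto
    also have "\<dots> = p a b * (1 - (S - e b)) + e b * (q a - p a b)"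
    proof -
      have "(\<Sum>j'\<in>{1..K} - {b}. e j') = S - e b"
        unfolding S_def using b by (subst sum.remove[of _ b]) auto
      moreover have "(\<Sum>i\<in>{1..K} - {b}. p a i * Tunif K e i b) = (\<Sum>i\<in>{1..K} - {b}. e b * p a i)"
        by (intro sum.cong refl) (auto simp: Tunif_def)
      moreover have "(\<Sum>i\<in>{1..K} - {b}. p a i) = q a - p a b"
        unfolding q_split using b by (subst sum.remove[of _ b]) auto
      ultimately show ?thesis by (simp add: Tunif_def sum_distrib_left[symmetric])
    qed
    also have "\<dots> = (1 - S) * p a b + e b * q a" by (simp add: algebra_simps)
    finally show ?thesis .
  qed
  have q_sum: "(\<Sum>a\<in>{1..K}. q a) = 1"
  proof -
    have "measure M {\<omega>\<in>space M. True} = (\<Sum>a\<in>{1..K}. measure M {\<omega>\<in>space M. True \<and> Z \<omega> = a})"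
      by (rule split_meas[OF M Zm Zr]) simp
    then show ?thesis by (simp add: q_def prob_space)
  qed
  have mut1: "mut b = (1 - S) * mu b + e b" if b: "b \<in> {1..K}" for b
  proof -
    have "mut b = (\<Sum>a\<in>{1..K}. measure M {\<omega>\<in>space M. Yt \<omega> = b \<and> Z \<omega> = a})"
      unfolding mut_def by (rule split_meas[OF M Zm Zr]) measurable
    also have "\<dots> = (\<Sum>a\<in>{1..K}. pt a b)"
      unfolding pt_def by (intro sum.cong refl arg_cong[where f="measure M"]) auto
    also have "\<dots> = (\<Sum>a\<in>{1..K}. (1 - S) * p a b + e b * q a)"
      using b by (intro sum.cong refl pt1) auto
    also have "\<dots> = (1 - S) * (\<Sum>a\<in>{1..K}. p a b) + e b * (\<Sum>a\<in>{1..K}. q a)"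
      by (simp add: sum.distrib sum_distrib_left)
    also have "(\<Sum>a\<in>{1..K}. p a b) = mu b"
    proof -
      have "mu b = (\<Sum>a\<in>{1..K}. measure M {\<omega>\<in>space M. Y \<omega> = b \<and> Z \<omega> = a})"
        unfolding mu_def by (rule split_meas[OF M Zm Zr]) measurable
      also have "\<dots> = (\<Sum>a\<in>{1..K}. p a b)"
        unfolding p_def by (intro sum.cong refl arg_cong[where f="measure M"]) auto
      finally show ?thesis by simp
    qed
    finally show ?thesis using q_sum by simp
  qed
  have L1: "(\<Sum>a\<in>{1..K}. \<Sum>b\<in>{1..K}. g a b * pt a b)
      = (1 - S) * (\<Sum>a\<in>{1..K}. \<Sum>b\<in>{1..K}. g a b * p a b) + (\<Sum>b\<in>{1..K}. e b * (\<Sum>a\<in>{1..K}. g a b * q a))"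
  proof -
    have "(\<Sum>a\<in>{1..K}. \<Sum>b\<in>{1..K}. g a b * pt a b)
        = (\<Sum>a\<in>{1..K}. \<Sum>b\<in>{1..K}. (1 - S) * (g a b * p a b) + e b * (g a b * q a))"
      by (intro sum.cong refl) (simp add: pt1 algebra_simps)
    also have "\<dots> = (1 - S) * (\<Sum>a\<in>{1..K}. \<Sum>b\<in>{1..K}. g a b * p a b) + (\<Sum>a\<in>{1..K}. \<Sum>b\<in>{1..K}. e b * (g a b * q a))"
      by (simp add: sum.distrib sum_distrib_left)
    also have "(\<Sum>a\<in>{1..K}. \<Sum>b\<in>{1..K}. e b * (g a b * q a)) = (\<Sum>b\<in>{1..K}. e b * (\<Sum>a\<in>{1..K}. g a b * q a))"
      by (subst sum.swap) (simp add: sum_distrib_left)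
    finally show ?thesis .
  qed
  have L2: "(\<Sum>a\<in>{1..K}. \<Sum>b\<in>{1..K}. F a b * (q a * mut b))
      = (1 - S) * (\<Sum>a\<in>{1..K}. \<Sum>b\<in>{1..K}. F a b * (q a * mu b)) + (\<Sum>b\<in>{1..K}. e b * (\<Sum>a\<in>{1..K}. F a b * q a))"
  proof -
    have "(\<Sum>a\<in>{1..K}. \<Sum>b\<in>{1..K}. F a b * (q a * mut b))
        = (\<Sum>a\<in>{1..K}. \<Sum>b\<in>{1..K}. (1 - S) * (F a b * (q a * mu b)) + e b * (F a b * q a))"
      by (intro sum.cong refl) (simp add: mut1 algebra_simps)
    also have "\<dots> = (1 - S) * (\<Sum>a\<in>{1..K}. \<Sum>b\<in>{1..K}. F a b * (q a * mu b)) + (\<Sum>a\<in>{1..K}. \<Sum>b\<in>{1..K}. e b * (F a b * q a))"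
      by (simp add: sum.distrib sum_distrib_left)
    also have "(\<Sum>a\<in>{1..K}. \<Sum>b\<in>{1..K}. e b * (F a b * q a)) = (\<Sum>b\<in>{1..K}. e b * (\<Sum>a\<in>{1..K}. F a b * q a))"
      by (subst sum.swap) (simp add: sum_distrib_left)
    finally show ?thesis .
  qed
  have "(\<Sum>j\<in>{1..K}. e j * DeltaF M X h g D f j)
      = (\<Sum>b\<in>{1..K}. e b * (\<Sum>a\<in>{1..K}. g a b * q a)) - (\<Sum>b\<in>{1..K}. e b * (\<Sum>a\<in>{1..K}. F a b * q a))"
    by (simp add: dD right_diff_distrib sum_subtractf)
  then show ?thesis
    unfolding dY dYt L1 L2 S_def[symmetric] by (simp add: algebra_simps)
qed

end
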